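(* Let $F\in\{\triangle_0,\mathcal{T}\mathbb{R}_0,\mathcal{T}\mathbb{C}_0,\mathcal{T}\triangle_0\}$. Define $H:F\times[0,1]\to F$ by $H(0,t)=0$ and $H(x,t)=x|x|^{-t}$ for $x\ne0$. Then $H$ is a hyperfield homotopy. Moreover $H_0$ is the identity and $H_1(x)=\operatorname{ph}(x)$.
   Context: Hyperfields. A hyperfield $(F,\odot,\boxplus,1,0)$ has the following data and axioms. - $\odot$ is a commutative multiplication and $\boxplus$ is a hyperaddition assigning to each $x,y$ a nonempty subset $x\boxplus y\subseteq F$ (extended to subsets by unions). - $\boxplus$ is commutative and associative, and $x\boxplus 0=\{x\}$. - Each $x$ has a unique $-x$ with $0\in x\boxplus(-x)$, and $x\in y\boxplus z \iff z\in x\boxplus(-y)$. - $(F\setminus\{0\},\odot,1)$ is an abelian group, $0\odot x=0$, and $x\odot(y\boxplus z)=(x\odot y)\boxplus(x\odot z)$. A homomorphism $h$ satisfies $h(0)=0$, $h(1)=1$, $h(xy)=h(x)h(y)$ and $h(x\boxplus y)\subseteq h(x)\boxplus h(y)$. Topological hyperfields. A topological hyperfield is a hyperfield with a topology in which $F\setminus\{0\}$ is open, multiplication is continuous, and inversion on $F^\times$ is continuous. If $T$ is the topology, the 0-coarse topology has as open sets $F$ together with all $U\in T$ with $0\notin U$. A hyperfield homotopy between topological hyperfields $F,F'$ is a continuous $H:F\times[0,1]\to F'$ such that each $H_t=H(\cdot,t)$ is a hyperfield homomorphism. The hyperfields in the claim all use the usual multiplication of $\mathbb{C}$. - $\triangle=\mathbb{R}_{\ge0}$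 with $a\boxplus b=[|a-b|,a+b]$. - $\mathcal{T}\triangle=\mathbb{R}_{\ge0}$ with $a\boxplus b=\{\max(a,b)\}$ if $a\ne b$, and $a\boxplus a=[0,a]$. - $\mathcal{T}\mathbb{R}=\mathbb{R}$ with $a\boxplus b=\{a\}$ if $|a|>|b|$ or $a=b$, and $a\boxplus(-a)=[-|a|,|a|]$. - $\mathcal{T}\mathbb{C}=\mathbb{C}$ with the following hyperaddition: $a\boxplus b=\{a\}$ if $|a|>|b|$; $a\boxplus(-a)$ is the closed disk $\{x:|x|\le|a|\}$; if $|a|=|b|$ and $b\ne-a$, then $a\boxplus b$ is the shortest closed arc from $a$ to $b$ on the circle of radius $|a|$ centered at $0$. The subscript $0$ means the 0-coarse topology derived from the usual Euclidean topology. $\operatorname{ph}(x)=x/|x|$ for $x\ne0$, and $\operatorname{ph}(0)=0$. *)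

theory Defs
  imports "HOL-Analysis.Analysis"
begin

text \<open>Concrete hyperfields whose multiplication is the ordinary multiplication of a
real normed field ('a = real or complex). A hyperfield is given by its carrier S
(a subset of 'a, containing 0 and 1, closed under multiplication) and its
hyperaddition hadd.\<close>

definition tri_add :: "real \<Rightarrow> real \<Rightarrow> real set" where
  "tri_add a b = {\<bar>a - b\<bar>..a + b}"

definition ttri_add :: "real \<Rightarrow> real \<Rightarrow> real set" where
  "ttri_add a b = (if a \<noteq> b then {max a b} else {0..a})"

definition tR_add :: "real \<Rightarrow> real \<Rightarrow> real set" where
  "tR_add a b =
     (if \<bar>a\<bar> > \<bar>b\<bar> \<or> a = b then {a}
      else if \<bar>b\<bar> > \<bar>a\<bar> then {b}
      else {- \<bar>a\<bar>..\<bar>a\<bar>})"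

text \<open>Shortest closed arc from a to b on the circle of radius norm a (when
norm a = norm b and b \<noteq> -a): the radial projection of the chord [a,b].\<close>
definition short_arc :: "complex \<Rightarrow> complex \<Rightarrow> complex set" where
  "short_arc a b = {complex_of_real (norm a) * sgn w | w. w \<in> closed_segment a b}"

definition tC_add :: "complex \<Rightarrow> complex \<Rightarrow> complex set" where
  "tC_add a b =
     (if norm a > norm b then {a}
      else if norm b > norm a then {b}
      else if b = - a then cball 0 (norm a)
      else short_arc a b)"

definition coarse0 :: "'a::real_normed_field set \<Rightarrow> 'a topology" where
  "coarse0 S = topology (\<lambda>U. U = S \<or> (openin (top_of_set S) U \<and> 0 \<notin> U))"

definition hf_hom ::
  "'a::real_normed_field set \<Rightarrow> ('a \<Rightarrow> 'a \<Rightarrow> 'a set) \<Rightarrow>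
   'b::real_normed_field set \<Rightarrow> ('b \<Rightarrow> 'b \<Rightarrow> 'b set) \<Rightarrow> ('a \<Rightarrow> 'b) \<Rightarrow> bool" where
  "hf_hom S hadd S' hadd' h \<longleftrightarrow>
     h ` S \<subseteq> S' \<and> h 0 = 0 \<and> h 1 = 1 \<and>
     (\<forall>x\<in>S. \<forall>y\<in>S. h (x * y) = h x * h y) \<and>
     (\<forall>x\<in>S. \<forall>y\<in>S. h ` (hadd x y) \<subseteq> hadd' (h x) (h y))"

definition hf_homotopy ::
  "'a::real_normed_field set \<Rightarrow> ('a \<Rightarrow> 'a \<Rightarrow> 'a set) \<Rightarrow>
   'b::real_normed_field set \<Rightarrow> ('b \<Rightarrow> 'b \<Rightarrow> 'b set) \<Rightarrow> ('a \<times> real \<Rightarrow> 'b) \<Rightarrow> bool" where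
  "hf_homotopy S hadd S' hadd' H \<longleftrightarrow>
     continuous_map (prod_topology (coarse0 S) (top_of_set {0..1})) (coarse0 S') H \<and>
     (\<forall>t\<in>{0..1}. hf_hom S hadd S' hadd' (\<lambda>x. H (x, t)))"

definition Hmap :: "'a::real_normed_field \<times> real \<Rightarrow> 'a" where
  "Hmap p = (let (x, t) = p in if x = 0 then 0 else x * of_real (norm x powr (- t)))"

definition ph :: "'a::real_normed_field \<Rightarrow> 'a" where
  "ph x = (if x = 0 then 0 else x / of_real (norm x))"

end

theory Submission imports Defs begin
lemma openin_coarse0:
  "openin (coarse0 S) U \<longleftrightarrow> U = S \<or> (openin (top_of_set S) U \<and> 0 \<notin> U)"
proof -
  have "istopology (\<lambda>U. U = S \<or> (openin (top_of_set S) U \<and> 0 \<notin> U))"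
    unfolding istopology_def
  proof (intro conjI allI impI)
    fix A B assume "A = S \<or> (openin (top_of_set S) A \<and> 0 \<notin> A)"
      "B = S \<or> (openin (top_of_set S) B \<and> 0 \<notin> B)"
    then show "A \<inter> B = S \<or> (openin (top_of_set S) (A \<inter> B) \<and> 0 \<notin> A \<inter> B)"
      by (metis Int_absorb Int_absorb1 Int_absorb2 Int_iff openin_Int openin_imp_subset)
  next
    fix K assume K: "\<forall>A\<in>K. A = S \<or> (openin (top_of_set S) A \<and> 0 \<notin> A)"
    show "\<Union>K = S \<or> (openin (top_of_set S) (\<Union>K) \<and> 0 \<notin> \<Union>K)"
    proof (cases "S \<in> K")
      case True
      have "\<Union>K \<subseteq> S" using K openin_imp_subset by fastforce
      then show ?thesis using True by blast
    next
      case False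
      then show ?thesis using K by auto
    qed
  qed
  then show ?thesis unfolding coarse0_def by simp
qed

lemma topspace_coarse0: "topspace (coarse0 S) = S"
  unfolding topspace_def openin_coarse0 using openin_imp_subset by auto

lemma sub_coarse0:
  assumes "0 \<in> S"
  shows "subtopology (coarse0 S) (S - {0}) = top_of_set (S - {0})"
proof -
  have o1: "openin (top_of_set S) (S - {0})"
    by (metis Diff_eq closed_singleton open_Compl openin_open_Int)
  have o2: "openin (coarse0 S) (S - {0})" using o1 by (simp add: openin_coarse0)
  have e: "top_of_set (S - {0}) = subtopology (top_of_set S) (S - {0})"
    by (simp add: subtopology_subtopology Int_absorb1 Diff_subset)
  show ?thesis
    unfolding topology_eq e
    using assms by (auto simp: openin_open_subtopology[OF o1] openin_open_subtopology[OF o2] openin_coarse0)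
qed

lemma coarse_cont:
  fixes H :: "'a::real_normed_field \<times> real \<Rightarrow> 'a"
  assumes "0 \<in> S"
    and into: "\<And>x t. x \<in> S \<Longrightarrow> t \<in> {0..1} \<Longrightarrow> H (x, t) \<in> S"
    and zero: "\<And>x t. x \<in> S \<Longrightarrow> t \<in> {0..1} \<Longrightarrow> H (x, t) = 0 \<longleftrightarrow> x = 0"
    and cont: "continuous_on ((S - {0}) \<times> {0..1}) H"
  shows "continuous_map (prod_topology (coarse0 S) (top_of_set {0..1})) (coarse0 S) H"
  unfolding continuous_map_openin_preimage_eq
proof (intro conjI allI impI)
  let ?X = "prod_topology (coarse0 S) (top_of_set {0..1::real})"
  have ts: "topspace ?X = S \<times> {0..1}" by (simp add: topspace_coarse0)
  show "H \<in> topspace ?X \<rightarrow> topspace (coarse0 S)"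
    using into by (auto simp: ts topspace_coarse0)
  fix U assume U: "openin (coarse0 S) U"
  show "openin ?X (topspace ?X \<inter> H -` U)"
  proof (cases "U = S")
    case True
    then have "topspace ?X \<inter> H -` U = topspace ?X" using into by (auto simp: ts topspace_coarse0)
    then show ?thesis by (metis openin_topspace)
  next
    case False
    with U have U1: "openin (top_of_set S) U" and U0: "0 \<notin> U" by (auto simp: openin_coarse0)
    let ?A = "(S - {0}) \<times> {0..1::real}"
    have eq: "topspace ?X \<inter> H -` U = ?A \<inter> H -` U"
      using zero U0 by (auto simp: ts topspace_coarse0) (metis)
    have "openin (top_of_set ?A) (?A \<inter> H -` U)"
      by (rule continuous_openin_preimage[OF cont _ U1]) (use into in auto)
    moreover have "top_of_set ?A = subtopology ?X ?A"
      by (simp add: subtopology_Times sub_coarse0[OF assms(1)] subtopology_subtopology)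
    moreover have "openin ?X ?A"
    proof -
      have "openin (coarse0 S) (S - {0})"
        by (simp add: openin_coarse0) (metis Diff_eq closed_singleton open_Compl openin_open_Int)
      then show ?thesis by (simp add: openin_prod_Times_iff)
    qed
    ultimately show ?thesis unfolding eq by (metis openin_trans_full)
  qed
qed

lemma H0[simp]: "Hmap (0, t) = 0" by (simp add: Hmap_def)
lemma Hnz: "x \<noteq> 0 \<Longrightarrow> Hmap (x, t) = x * of_real (norm x powr - t)" by (simp add: Hmap_def)
lemma Hzero_iff[simp]: "Hmap (x, t) = 0 \<longleftrightarrow> x = 0" by (simp add: Hmap_def)
lemma Hnorm: "norm (Hmap (x, t)) = norm x powr (1 - t)"
proof (cases "x = 0")
  case False
  then have "norm (Hmap (x, t)) = norm x * norm x powr - t" by (simp add: Hnz norm_mult)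
  also have "\<dots> = norm x powr (1 - t)" using False by (simp add: powr_diff powr_minus divide_inverse)
  finally show ?thesis .
qed simp
lemma Hmult: "Hmap (x * y, t) = Hmap (x, t) * Hmap (y, t)"
  by (cases "x = 0 \<or> y = 0") (auto simp: Hnz norm_mult powr_mult mult_ac)
lemma Hone[simp]: "Hmap (1, t) = 1" by (simp add: Hnz)
lemma Hneg: "Hmap (- x, t) = - Hmap (x, t)" by (cases "x = 0") (auto simp: Hnz)
lemma Ht0: "Hmap (x, 0) = x" by (cases "x = 0") (auto simp: Hnz)
lemma Ht1: "Hmap (x, 1) = ph x" by (cases "x = 0") (auto simp: Hnz ph_def powr_minus divide_inverse)
lemma Hreal_nonneg: "(x::real) \<ge> 0 \<Longrightarrow> Hmap (x, t) = x powr (1 - t)"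
  using Hnorm[of x t] by (cases "x = 0") (auto simp: Hnz)
lemma Hcont: "continuous_on (A \<times> B) (Hmap :: 'a::real_normed_field \<times> real \<Rightarrow> 'a)" if "0 \<notin> A"
proof -
  have "continuous_on (A \<times> B) (\<lambda>p. fst p * of_real (norm (fst p) powr - snd p) :: 'a)"
    using that by (intro continuous_intros) auto
  then show ?thesis
    by (rule continuous_on_cong[THEN iffD1, rotated 2]) (use that in \<open>auto, metis Hnz\<close>)
qed

lemma subadd:
  fixes x y s :: real
  assumes "0 \<le> x" "0 \<le> y" "0 \<le> s" "s \<le> 1"
  shows "(x + y) powr s \<le> x powr s + y powr s"
proof (cases "x = 0 \<or> y = 0")
  case True then show ?thesis using assms by auto
next
  case False
  then have xy: "x > 0" "y > 0" using assms by auto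
  show ?thesis
  proof (cases "s = 0")
    case True then show ?thesis using xy by simp
  next
    case False
    let ?z = "x + y"
    have z: "?z > 0" using xy by simp
    have a: "x / ?z \<le> (x / ?z) powr s"
      using powr_mono'[of s 1 "x / ?z"] xy assms by auto
    have b: "y / ?z \<le> (y / ?z) powr s"
      using powr_mono'[of s 1 "y / ?z"] xy assms by auto
    have ex: "x powr s = ?z powr s * (x / ?z) powr s" using xy z by (simp add: powr_divide)
    have ey: "y powr s = ?z powr s * (y / ?z) powr s" using xy z by (simp add: powr_divide)
    have "x powr s + y powr s \<ge> ?z powr s * (x / ?z + y / ?z)"
    proof -
      have p: "?z powr s \<ge> 0" by simp
      have "?z powr s * (x / ?z) \<le> ?z powr s * (x / ?z) powr s" using mult_left_mono[OF a p] .
      moreover have "?z powr s * (y / ?z) \<le> ?z powr s * (y / ?z) powr s" using mult_left_mono[OF b p] .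
      ultimately show ?thesis unfolding ex ey by (simp add: distrib_left)
    qed
    also have "x / ?z + y / ?z = 1" using z by (simp add: add_divide_distrib[symmetric])
    finally show ?thesis by simp
  qed
qed


lemma Hmono_nonneg: "0 \<le> (x::real) \<Longrightarrow> x \<le> y \<Longrightarrow> t \<le> 1 \<Longrightarrow> Hmap (x, t) \<le> Hmap (y, t)"
  by (simp add: Hreal_nonneg powr_mono2)

lemma hom_tri: assumes t: "0 \<le> t" "t \<le> 1" and ab: "0 \<le> a" "0 \<le> (b::real)" and c: "c \<in> tri_add a b"
  shows "Hmap (c, t) \<in> tri_add (Hmap (a, t)) (Hmap (b, t))"
proof -
  let ?h = "\<lambda>x. Hmap (x, t)"
  have c1: "\<bar>a - b\<bar> \<le> c" "c \<le> a + b" using c by (auto simp: tri_add_def)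
  have c0: "0 \<le> c" using c1 by linarith
  have sa: "?h (x + y) \<le> ?h x + ?h y" if "0 \<le> x" "0 \<le> y" for x y :: real
    using that t subadd[of x y "1 - t"] by (simp add: Hreal_nonneg)
  have up: "?h c \<le> ?h a + ?h b"
    using Hmono_nonneg[OF c0 c1(2) t(2)] sa[OF ab] by linarith
  have l1: "?h a \<le> ?h c + ?h b"
    using Hmono_nonneg[of a "c + b" t] c1 ab t sa[OF c0 ab(2)] by linarith
  have l2: "?h b \<le> ?h c + ?h a"
    using Hmono_nonneg[of b "c + a" t] c1 ab t sa[OF c0 ab(1)] by linarith
  show ?thesis using up l1 l2 by (auto simp: tri_add_def)
qed

lemma hom_ttri: assumes t: "0 \<le> t" "t \<le> 1" and ab: "0 \<le> a" "0 \<le> (b::real)" and c: "c \<in> ttri_add a b"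
  shows "Hmap (c, t) \<in> ttri_add (Hmap (a, t)) (Hmap (b, t))"
proof (cases "a = b")
  case True
  then have "0 \<le> c" "c \<le> a" using c by (auto simp: ttri_add_def)
  then show ?thesis using True Hmono_nonneg[of 0 c t] Hmono_nonneg[of c a t] t
    by (auto simp: ttri_add_def)
next
  case False
  then have cm: "c = max a b" using c by (auto simp: ttri_add_def)
  have "Hmap (c, t) = max (Hmap (a, t)) (Hmap (b, t))"
    unfolding cm using Hmono_nonneg[of a b t] Hmono_nonneg[of b a t] Hmono_nonneg[of 0 b t] ab t
    by (cases "a \<le> b") (auto simp: max_def)
  moreover have "0 \<le> Hmap (b, t)" "0 \<le> Hmap (a, t)" using ab by (simp_all add: Hreal_nonneg)
  ultimately show ?thesis by (auto simp: ttri_add_def max_def)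
qed

lemma Hnorm_mono: "norm x \<le> norm y \<Longrightarrow> t \<le> 1 \<Longrightarrow> norm (Hmap (x, t)) \<le> norm (Hmap (y, t))"
  by (simp add: Hnorm powr_mono2)

lemma tR_mem1: "\<bar>u\<bar> \<ge> \<bar>v\<bar> \<Longrightarrow> u \<in> tR_add u v"
  by (auto simp: tR_add_def)
lemma tR_mem2: "\<bar>v\<bar> \<ge> \<bar>u\<bar> \<Longrightarrow> v \<in> tR_add u v"
  by (auto simp: tR_add_def)

lemma hom_tR: assumes t: "0 \<le> t" "t \<le> 1" and c: "c \<in> tR_add a (b::real)"
  shows "Hmap (c, t) \<in> tR_add (Hmap (a, t)) (Hmap (b, t))"
proof -
  have nm: "\<And>x y::real. \<bar>x\<bar> \<le> \<bar>y\<bar> \<Longrightarrow> \<bar>Hmap (x, t)\<bar> \<le> \<bar>Hmap (y, t)\<bar>"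
    using Hnorm_mono[OF _ t(2)] by (metis real_norm_def)
  consider "\<bar>a\<bar> > \<bar>b\<bar> \<or> a = b" | "\<not> (\<bar>a\<bar> > \<bar>b\<bar> \<or> a = b)" "\<bar>b\<bar> > \<bar>a\<bar>"
    | "\<not> (\<bar>a\<bar> > \<bar>b\<bar> \<or> a = b)" "\<not> \<bar>b\<bar> > \<bar>a\<bar>" by blast
  then show ?thesis
  proof cases
    case 1
    then have "c = a" using c by (auto simp: tR_add_def)
    then show ?thesis using 1 nm[of b a] by (auto intro!: tR_mem1)
  next
    case 2
    then have "c = b" using c by (auto simp: tR_add_def)
    then show ?thesis using 2 nm[of a b] by (auto intro!: tR_mem2)
  next
    case 3
    then have b: "b = - a" "a \<noteq> 0" by auto
    then have cc: "\<bar>c\<bar> \<le> \<bar>a\<bar>" using c 3 by (auto simp: tR_add_def)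
    have hb: "Hmap (b, t) = - Hmap (a, t)" "Hmap (a, t) \<noteq> 0" using b by (auto simp: Hneg)
    then have "tR_add (Hmap (a, t)) (Hmap (b, t)) = {- \<bar>Hmap (a, t)\<bar>..\<bar>Hmap (a, t)\<bar>}"
      by (auto simp: tR_add_def)
    then show ?thesis using nm[OF cc] by auto
  qed
qed

lemma norm_sgn_id: "of_real (norm u) * sgn u = (u::complex)"
  by (cases "u = 0") (simp_all add: sgn_div_norm scaleR_conv_of_real)
lemma tC_mem1: "norm u \<ge> norm v \<Longrightarrow> u \<in> tC_add u v"
  unfolding tC_add_def short_arc_def
  by (auto intro!: exI[of _ u] simp: norm_sgn_id)
lemma tC_mem2: "norm v \<ge> norm u \<Longrightarrow> v \<in> tC_add u v"
  unfolding tC_add_def short_arc_def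
  by (auto intro!: exI[of _ v] simp: norm_sgn_id)

lemma hom_tC: assumes t: "0 \<le> t" "t \<le> 1" and c: "c \<in> tC_add a (b::complex)"
  shows "Hmap (c, t) \<in> tC_add (Hmap (a, t)) (Hmap (b, t))"
proof -
  have nm: "\<And>x y::complex. norm x \<le> norm y \<Longrightarrow> norm (Hmap (x, t)) \<le> norm (Hmap (y, t))"
    using Hnorm_mono[OF _ t(2)] by blast
  consider "norm a > norm b" | "norm b > norm a" | "norm a = norm b" "b = - a"
    | "norm a = norm b" "b \<noteq> - a" by linarith
  then show ?thesis
  proof cases
    case 1
    then have "c = a" using c by (auto simp: tC_add_def)
    then show ?thesis using 1 nm[of b a] by (auto intro!: tC_mem1)
  next
    case 2
    then have "c = b" using c by (auto simp: tC_add_def)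
    then show ?thesis using 2 nm[of a b] by (auto intro!: tC_mem2)
  next
    case 3
    then have cc: "norm c \<le> norm a" using c by (auto simp: tC_add_def)
    have hb: "Hmap (b, t) = - Hmap (a, t)" using 3 by (auto simp: Hneg)
    then have "tC_add (Hmap (a, t)) (Hmap (b, t)) = cball 0 (norm (Hmap (a, t)))"
      by (auto simp: tC_add_def)
    then show ?thesis using nm[OF cc] by auto
  next
    case 4
    then have a0: "a \<noteq> 0" by auto
    from 4 c obtain w where w: "w \<in> closed_segment a b" and cw: "c = of_real (norm a) * sgn w"
      by (auto simp: tC_add_def short_arc_def)
    define k where "k = norm a powr - t"
    have k: "k > 0" using a0 by (simp add: k_def)
    have ha: "Hmap (a, t) = a * of_real k" using a0 by (simp add: Hnz k_def)
    have b0: "b \<noteq> 0" using a0 4 by auto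
    have hb: "Hmap (b, t) = b * of_real k" using Hnz[OF b0] 4(1) by (simp add: k_def)
    have nha: "norm (Hmap (a, t)) = norm a * k" using ha k by (simp add: norm_mult)
    have ne: "Hmap (b, t) \<noteq> - Hmap (a, t)"
    proof
      assume "Hmap (b, t) = - Hmap (a, t)"
      then have "b * of_real k = (- a) * of_real k" unfolding ha hb by simp
      then have "b = - a" using k by (metis mult_cancel_right of_real_eq_0_iff less_irrefl)
      then show False using 4 by simp
    qed
    have neq: "norm (Hmap (b, t)) = norm (Hmap (a, t))" using 4(1) by (simp add: Hnorm)
    have tgt: "tC_add (Hmap (a, t)) (Hmap (b, t)) = short_arc (Hmap (a, t)) (Hmap (b, t))"
      using ne neq by (simp add: tC_add_def)
    have hc: "Hmap (c, t) = of_real (norm (Hmap (a, t))) * sgn (of_real k * w)"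
    proof (cases "w = 0")
      case True then show ?thesis by (simp add: cw)
    next
      case False
      have "norm c = norm a" using False by (simp add: cw norm_mult norm_sgn)
      moreover have "c \<noteq> 0" using a0 False by (simp add: cw sgn_eq_0_iff)
      ultimately have "Hmap (c, t) = c * of_real k" using Hnz[of c t] by (simp add: k_def)
      moreover have "sgn (of_real k * w) = sgn w" using k by (simp add: sgn_mult sgn_of_real)
      ultimately show ?thesis by (simp add: cw nha)
    qed
    have "of_real k * w \<in> closed_segment (Hmap (a, t)) (Hmap (b, t))"
    proof -
      from w obtain u where u: "0 \<le> u" "u \<le> 1" "w = (1 - u) *\<^sub>R a + u *\<^sub>R b"
        by (auto simp: closed_segment_def)
      then show ?thesis unfolding ha hb closed_segment_def u(3)
        by (auto intro!: exI[of _ u] simp: scaleR_conv_of_real algebra_simps)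
    qed
    then show ?thesis unfolding tgt short_arc_def hc by blast
  qed
qed

lemma homotopy_gen:
  fixes S :: "'a::real_normed_field set"
  assumes S0: "0 \<in> S"
    and into: "\<And>x t. x \<in> S \<Longrightarrow> t \<in> {0..1} \<Longrightarrow> Hmap (x, t) \<in> S"
    and add: "\<And>x y c t. x \<in> S \<Longrightarrow> y \<in> S \<Longrightarrow> t \<in> {0..1} \<Longrightarrow> c \<in> hadd x y \<Longrightarrow>
               Hmap (c, t) \<in> hadd (Hmap (x, t)) (Hmap (y, t))"
  shows "hf_homotopy S hadd S hadd Hmap"
  unfolding hf_homotopy_def hf_hom_def
proof (intro conjI ballI)
  show "continuous_map (prod_topology (coarse0 S) (top_of_set {0..1})) (coarse0 S) Hmap"
    by (rule coarse_cont[where H=Hmap, OF S0]) (auto intro: Hcont into)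
next
  fix t :: real assume t: "t \<in> {0..1}"
  show "(\<lambda>x. Hmap (x, t)) ` S \<subseteq> S" using into t by auto
  show "Hmap (0, t) = 0" by simp
  show "Hmap (1, t) = 1" by simp
  show "\<And>x y. Hmap (x * y, t) = Hmap (x, t) * Hmap (y, t)" by (rule Hmult)
  fix x y assume "x \<in> S" "y \<in> S"
  then show "(\<lambda>x. Hmap (x, t)) ` hadd x y \<subseteq> hadd (Hmap (x, t)) (Hmap (y, t))"
    using add t by auto
qed

theorem proposition2p1:
  shows
    "(hf_homotopy {0::real..} tri_add {0..} tri_add Hmap \<and>
        (\<forall>x\<in>{0::real..}. Hmap (x, 0) = x \<and> Hmap (x, 1) = ph x)) \<and>
     (hf_homotopy (UNIV::real set) tR_add UNIV tR_add Hmap \<and>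
        (\<forall>x::real. Hmap (x, 0) = x \<and> Hmap (x, 1) = ph x)) \<and>
     (hf_homotopy (UNIV::complex set) tC_add UNIV tC_add Hmap \<and>
        (\<forall>x::complex. Hmap (x, 0) = x \<and> Hmap (x, 1) = ph x)) \<and>
     (hf_homotopy {0::real..} ttri_add {0..} ttri_add Hmap \<and>
        (\<forall>x\<in>{0::real..}. Hmap (x, 0) = x \<and> Hmap (x, 1) = ph x))"
proof (intro conjI ballI allI)
  show "hf_homotopy {0::real..} tri_add {0..} tri_add Hmap"
    proof (rule homotopy_gen)
    show "\<And>x y c t. x \<in> {0::real..} \<Longrightarrow> y \<in> {0..} \<Longrightarrow> t \<in> {0..1} \<Longrightarrow> c \<in> tri_add x y \<Longrightarrow> Hmap (c, t) \<in> tri_add (Hmap (x, t)) (Hmap (y, t))"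
      using hom_tri by auto
  qed (auto simp: Hreal_nonneg)
  show "hf_homotopy {0::real..} ttri_add {0..} ttri_add Hmap"
    proof (rule homotopy_gen)
    show "\<And>x y c t. x \<in> {0::real..} \<Longrightarrow> y \<in> {0..} \<Longrightarrow> t \<in> {0..1} \<Longrightarrow> c \<in> ttri_add x y \<Longrightarrow> Hmap (c, t) \<in> ttri_add (Hmap (x, t)) (Hmap (y, t))"
      using hom_ttri by auto
  qed (auto simp: Hreal_nonneg)
  show "hf_homotopy (UNIV::real set) tR_add UNIV tR_add Hmap"
    by (rule homotopy_gen) (auto intro: hom_tR)
  show "hf_homotopy (UNIV::complex set) tC_add UNIV tC_add Hmap"
    by (rule homotopy_gen) (auto intro: hom_tC)
qed (simp_all add: Ht0 Ht1)

end
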